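(* Let $\mathbb{B}=ro(Add(\omega,1))$ (in $V$). Let $\dot{x}\in V^{\mathbb{B}}$ be such that $\Vdash\dot{x}\subseteq\check{V}\wedge\dot{x}\notin\check{V}$ and every element of $\dot{x}$ is of the form $\langle\check{n},c\rangle$ with $n\in V$ and $c\in\mathbb{B}$. Then for all $b\in\mathbb{B}$ there is some $\mathcal{A}\subseteq Aut(\mathbb{B})^{V}$ with $|\mathcal{A}|>\omega$ such that for all $\sigma\neq\tau$ in $\mathcal{A}$, $\sigma(b)=b=\tau(b)$ and $b\Vdash\sigma\dot{x}\neq\tau\dot{x}$.
   Context: $\mathbb{B}$ is the complete Boolean algebra of regular open subsets of Cohen forcing $Add(\omega,1)$. For $\sigma\in Aut(\mathbb{B})$ and a $\mathbb{B}$-name $\dot x$, $\sigma\dot x$ is the name obtained by applying $\sigma$ recursively. *)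

theory Defs
  imports "HOL-Library.Countable_Set"
begin

text \<open>Conditions: finite partial functions from nat to bool.
  q extends p (q is stronger, q \<le> p) iff p \<subseteq>m q.\<close>

definition Cond :: "(nat \<rightharpoonup> bool) set" where
  "Cond = {p. finite (dom p)}"

definition cext :: "(nat \<rightharpoonup> bool) \<Rightarrow> (nat \<rightharpoonup> bool) \<Rightarrow> bool" where
  "cext q p \<longleftrightarrow> p \<subseteq>\<^sub>m q"

text \<open>Regular open subsets (= regular open cuts) of the Cohen poset.\<close>
definition RO :: "(nat \<rightharpoonup> bool) set set" where
  "RO = {U. U \<subseteq> Cond
          \<and> (\<forall>p\<in>U. \<forall>q\<in>Cond. cext q p \<longrightarrow> q \<in> U)
          \<and> (\<forall>p\<in>Cond. (\<forall>q\<in>Cond. cext q p \<longrightarrow> (\<exists>r\<in>Cond. cext r q \<and> r \<in> U)) \<longrightarrow> p \<in> U)}"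

definition btop :: "(nat \<rightharpoonup> bool) set" where "btop = Cond"

definition bneg :: "(nat \<rightharpoonup> bool) set \<Rightarrow> (nat \<rightharpoonup> bool) set" where
  "bneg U = {p\<in>Cond. \<forall>q\<in>Cond. cext q p \<longrightarrow> q \<notin> U}"

text \<open>Supremum in ro(P): regularization of the union.\<close>
definition bsup :: "(nat \<rightharpoonup> bool) set set \<Rightarrow> (nat \<rightharpoonup> bool) set" where
  "bsup S = {p\<in>Cond. \<forall>q\<in>Cond. cext q p \<longrightarrow> (\<exists>r\<in>Cond. cext r q \<and> r \<in> \<Union>S)}"

text \<open>Infimum in ro(P): intersection (the empty infimum is the top).\<close>
definition binf :: "(nat \<rightharpoonup> bool) set set \<Rightarrow> (nat \<rightharpoonup> bool) set" where
  "binf S = Cond \<inter> \<Inter>S"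

definition bimp :: "(nat \<rightharpoonup> bool) set \<Rightarrow> (nat \<rightharpoonup> bool) set \<Rightarrow> (nat \<rightharpoonup> bool) set" where
  "bimp a c = bsup {bneg a, c}"

text \<open>Such a name is represented by its set of pairs (n, c), n a ground object of type 'a,
  c \<in> B.  The check name of a ground set y is {(m-check, 1) | m \<in> y}.\<close>

definition check :: "'a set \<Rightarrow> ('a \<times> (nat \<rightharpoonup> bool) set) set" where
  "check y = {(m, btop) | m. m \<in> y}"

text \<open>[[n-check \<in> Y]] = sup over (m-check,d) \<in> Y of d \<and> [[n-check = m-check]],
  where [[n-check = m-check]] is 1 if n = m and 0 otherwise.\<close>
definition mem_val :: "'a \<Rightarrow> ('a \<times> (nat \<rightharpoonup> bool) set) set \<Rightarrow> (nat \<rightharpoonup> bool) set" where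
  "mem_val n Y = bsup {d. (n, d) \<in> Y}"

definition bsubset :: "('a \<times> (nat \<rightharpoonup> bool) set) set \<Rightarrow> ('a \<times> (nat \<rightharpoonup> bool) set) set
                         \<Rightarrow> (nat \<rightharpoonup> bool) set" where
  "bsubset X Y = binf {bimp c (mem_val n Y) | n c. (n, c) \<in> X}"

definition beq :: "('a \<times> (nat \<rightharpoonup> bool) set) set \<Rightarrow> ('a \<times> (nat \<rightharpoonup> bool) set) set
                     \<Rightarrow> (nat \<rightharpoonup> bool) set" where
  "beq X Y = bsubset X Y \<inter> bsubset Y X"

text \<open>Boolean algebra automorphisms of ro(P); outside RO the function is the identity,
  so that equality of automorphisms is equality of functions.\<close>
definition Aut :: "((nat \<rightharpoonup> bool) set \<Rightarrow> (nat \<rightharpoonup> bool) set) set" where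
  "Aut = {\<sigma>. bij_betw \<sigma> RO RO
             \<and> (\<forall>U\<in>RO. \<forall>V\<in>RO. \<sigma> (U \<inter> V) = \<sigma> U \<inter> \<sigma> V)
             \<and> (\<forall>U\<in>RO. \<sigma> (bneg U) = bneg (\<sigma> U))
             \<and> (\<forall>U. U \<notin> RO \<longrightarrow> \<sigma> U = U)}"

text \<open>Recursive application: sigma <n-check, c> = <sigma n-check, sigma c> = <n-check, sigma c>,
  since sigma fixes check names (sigma 1 = 1).\<close>
definition name_app :: "((nat \<rightharpoonup> bool) set \<Rightarrow> (nat \<rightharpoonup> bool) set)
                         \<Rightarrow> ('a \<times> (nat \<rightharpoonup> bool) set) set \<Rightarrow> ('a \<times> (nat \<rightharpoonup> bool) set) set" where
  "name_app \<sigma> X = {(n, \<sigma> c) | n c. (n, c) \<in> X}"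

end

theory Submission
  imports Defs "HOL-Library.Sublist"
begin


definition tm :: "bool list \<Rightarrow> (nat \<rightharpoonup> bool)" where
  "tm l = (\<lambda>i. if i < length l then Some (l!i) else None)"

definition opn :: "(nat \<rightharpoonup> bool) set \<Rightarrow> bool" where
  "opn U \<longleftrightarrow> (\<forall>p\<in>U. \<forall>q\<in>Cond. cext q p \<longrightarrow> q \<in> U)"

lemma dom_tm: "dom (tm l) = {..<length l}"
  by (auto simp: tm_def dom_def)

lemma tm_Cond[simp]: "tm l \<in> Cond"
  by (simp add: Cond_def dom_tm)

lemma cext_refl[simp]: "cext p p"
  by (simp add: cext_def)

lemma cext_trans: "cext r q \<Longrightarrow> cext q p \<Longrightarrow> cext r p"
  unfolding cext_def using map_le_trans by blast

lemma cext_tm: "cext (tm m) (tm l) \<longleftrightarrow> prefix l m"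
proof
  assume h: "cext (tm m) (tm l)"
  have len: "length l \<le> length m"
  proof (rule ccontr)
    assume "\<not> length l \<le> length m"
    then have "length m \<in> dom (tm l)" by (simp add: dom_tm)
    then have "tm l (length m) = tm m (length m)" using h by (simp add: cext_def map_le_def)
    then show False using \<open>\<not> length l \<le> length m\<close> by (simp add: tm_def)
  qed
  have "take (length l) m = l"
  proof (rule nth_equalityI)
    show "length (take (length l) m) = length l" using len by simp
    fix i assume "i < length (take (length l) m)"
    then have i: "i < length l" by simp
    then have "i \<in> dom (tm l)" by (simp add: dom_tm)
    then have "tm l i = tm m i" using h by (simp add: cext_def map_le_def)
    then show "take (length l) m ! i = l ! i" using i len by (simp add: tm_def split: if_splits)
  qed
  then show "prefix l m" by (metis take_is_prefix)
next
  assume "prefix l m"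
  then obtain w where "m = l @ w" by (auto simp: prefix_def)
  then show "cext (tm m) (tm l)"
    by (auto simp: cext_def map_le_def tm_def dom_def nth_append)
qed

lemma Cond_bound: "p \<in> Cond \<Longrightarrow> \<exists>N. \<forall>i. p i \<noteq> None \<longrightarrow> i < N"
  unfolding Cond_def
proof -
  assume "p \<in> {p. finite (dom p)}"
  then obtain k where "dom p \<subseteq> {..<k}" using finite_nat_iff_bounded by auto
  then show ?thesis by (auto simp: dom_def)
qed

lemma node_ext:
  assumes p: "p \<in> Cond" and e: "cext p (tm Y)"
  shows "\<exists>K. \<forall>N\<ge>K. \<exists>l. length l = N \<and> prefix Y l \<and> cext (tm l) p"
proof -
  obtain B where B: "\<And>i. p i \<noteq> None \<Longrightarrow> i < B" using Cond_bound[OF p] by blast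
  show ?thesis
  proof (rule exI[of _ "max B (length Y)"], intro allI impI)
    fix N assume N: "max B (length Y) \<le> N"
    define l where "l = map (\<lambda>i. case p i of Some v \<Rightarrow> v | None \<Rightarrow> False) [0..<N]"
    have len: "length l = N" by (simp add: l_def)
    have c: "cext (tm l) p"
      unfolding cext_def map_le_def
    proof
      fix i assume "i \<in> dom p"
      then obtain v where v: "p i = Some v" by auto
      then have "i < N" using B[of i] N by auto
      then show "p i = tm l i" using v by (simp add: tm_def l_def len)
    qed
    have "cext (tm l) (tm Y)" using cext_trans[OF c e] .
    then have "prefix Y l" by (simp add: cext_tm)
    then show "\<exists>l. length l = N \<and> prefix Y l \<and> cext (tm l) p" using len c by blast
  qed
qed

lemma node_ext1:
  assumes p: "p \<in> Cond"
  shows "\<exists>l. cext (tm l) p"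
proof -
  have "cext p (tm [])" by (simp add: cext_def map_le_def tm_def dom_def)
  then show ?thesis using node_ext[OF p] by blast
qed

lemma node_ext2:
  assumes p: "p \<in> Cond" and e: "cext p (tm Y)"
  shows "\<exists>l. prefix Y l \<and> cext (tm l) p"
  using node_ext[OF p e] by blast

lemma RO_opn: "U \<in> RO \<Longrightarrow> opn U"
  unfolding RO_def opn_def by blast

lemma RO_sub: "U \<in> RO \<Longrightarrow> U \<subseteq> Cond"
  unfolding RO_def by blast

lemma RO_reg: "U \<in> RO \<Longrightarrow> p \<in> Cond \<Longrightarrow> (\<forall>q\<in>Cond. cext q p \<longrightarrow> (\<exists>r\<in>Cond. cext r q \<and> r \<in> U)) \<Longrightarrow> p \<in> U"
  unfolding RO_def by blast

lemma opnD: "opn U \<Longrightarrow> p \<in> U \<Longrightarrow> q \<in> Cond \<Longrightarrow> cext q p \<Longrightarrow> q \<in> U"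
  by (auto simp: opn_def)

lemma opn_node: assumes "opn U" "tm l \<in> U" "prefix l m" shows "tm m \<in> U"
proof -
  have "cext (tm m) (tm l)" using assms(3) cext_tm by blast
  then show ?thesis using opnD[OF assms(1,2) tm_Cond] by blast
qed

lemma RO_nodes:
  assumes U: "U \<in> RO" and p: "p \<in> Cond"
  shows "p \<in> U \<longleftrightarrow> (\<forall>l. cext (tm l) p \<longrightarrow> tm l \<in> U)"
proof
  assume "p \<in> U" then show "\<forall>l. cext (tm l) p \<longrightarrow> tm l \<in> U"
    using opnD[OF RO_opn[OF U] _ tm_Cond] by blast
next
  assume h: "\<forall>l. cext (tm l) p \<longrightarrow> tm l \<in> U"
  show "p \<in> U"
  proof (rule RO_reg[OF U p], intro ballI impI)
    fix q assume q: "q \<in> Cond" "cext q p"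
    obtain l where l: "cext (tm l) q" using node_ext1[OF q(1)] by blast
    then show "\<exists>r\<in>Cond. cext r q \<and> r \<in> U" using h cext_trans[OF l q(2)] tm_Cond by blast
  qed
qed

lemma RO_eq_nodes:
  assumes "U \<in> RO" "V \<in> RO" "\<And>l. tm l \<in> U \<longleftrightarrow> tm l \<in> V"
  shows "U = V"
proof -
  have "U \<subseteq> Cond" "V \<subseteq> Cond" using assms RO_sub by auto
  show ?thesis
  proof (rule set_eqI)
    fix p show "p \<in> U \<longleftrightarrow> p \<in> V"
    proof (cases "p \<in> Cond")
      case True then show ?thesis using RO_nodes[OF assms(1) True] RO_nodes[OF assms(2) True] assms(3) by simp
    next
      case False then show ?thesis using \<open>U \<subseteq> Cond\<close> \<open>V \<subseteq> Cond\<close> by blast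
    qed
  qed
qed

lemma bsup_sub: "bsup S \<subseteq> Cond" unfolding bsup_def by blast

lemma bsup_RO: "bsup S \<in> RO"
  unfolding RO_def
proof (intro CollectI conjI ballI impI)
  show "bsup S \<subseteq> Cond" by (rule bsup_sub)
next
  fix p q assume "p \<in> bsup S" "q \<in> Cond" "cext q p"
  then show "q \<in> bsup S" unfolding bsup_def using cext_trans by blast
next
  fix p assume p: "p \<in> Cond" and h: "\<forall>q\<in>Cond. cext q p \<longrightarrow> (\<exists>r\<in>Cond. cext r q \<and> r \<in> bsup S)"
  show "p \<in> bsup S" unfolding bsup_def
  proof (intro CollectI conjI p ballI impI)
    fix q assume "q \<in> Cond" "cext q p"
    then obtain r where r: "r \<in> Cond" "cext r q" "r \<in> bsup S" using h by blast
    have "\<exists>r'\<in>Cond. cext r' r \<and> r' \<in> \<Union>S" proof -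
      have "r \<in> Cond \<and> (\<forall>q\<in>Cond. cext q r \<longrightarrow> (\<exists>r'\<in>Cond. cext r' q \<and> r' \<in> \<Union>S))"
        using r(3) unfolding bsup_def by (rule CollectD)
      then show ?thesis using r(1) cext_refl by blast
    qed
    then obtain r' where r': "r' \<in> Cond" "cext r' r" "r' \<in> \<Union>S" by blast
    show "\<exists>r\<in>Cond. cext r q \<and> r \<in> \<Union> S" using cext_trans[OF r'(2) r(2)] r'(1) r'(3) by blast
  qed
qed

lemma bsup_I: assumes "p \<in> Cond" "U \<in> S" "opn U" "p \<in> U" shows "p \<in> bsup S"
  unfolding bsup_def
proof (intro CollectI conjI assms(1) ballI impI)
  fix q assume "q \<in> Cond" "cext q p"
  then have "q \<in> U" using opnD[OF assms(3,4)] by blast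
  then show "\<exists>r\<in>Cond. cext r q \<and> r \<in> \<Union> S" using \<open>q \<in> Cond\<close> assms(2) cext_refl by blast
qed

lemma bsup_empty: "bsup {} = {}"
proof -
  { fix p assume "p \<in> bsup {}"
    then have "p \<in> Cond" "\<forall>q\<in>Cond. cext q p \<longrightarrow> (\<exists>r\<in>Cond. cext r q \<and> r \<in> \<Union>{})"
      unfolding bsup_def by auto
    then have False by auto }
  then show ?thesis by blast
qed

lemma bsup_Cond: "bsup {Cond} = Cond"
proof
  show "bsup {Cond} \<subseteq> Cond" by (rule bsup_sub)
  show "Cond \<subseteq> bsup {Cond}"
  proof
    fix p assume "p \<in> Cond"
    then show "p \<in> bsup {Cond}" using bsup_I[of p Cond "{Cond}"] by (auto simp: opn_def)
  qed
qed

lemma bneg_sub: "bneg U \<subseteq> Cond" unfolding bneg_def by blast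

lemma bneg_opn: "opn (bneg U)"
  unfolding opn_def bneg_def using cext_trans by blast

lemma bneg_RO: assumes "opn U" shows "bneg U \<in> RO"
  unfolding RO_def
proof (intro CollectI conjI ballI impI)
  show "bneg U \<subseteq> Cond" by (rule bneg_sub)
next
  fix p q assume "p \<in> bneg U" "q \<in> Cond" "cext q p"
  then show "q \<in> bneg U" using bneg_opn opnD by blast
next
  fix p assume p: "p \<in> Cond" and h: "\<forall>q\<in>Cond. cext q p \<longrightarrow> (\<exists>r\<in>Cond. cext r q \<and> r \<in> bneg U)"
  show "p \<in> bneg U" unfolding bneg_def
  proof (intro CollectI conjI p ballI impI)
    fix q assume q: "q \<in> Cond" "cext q p"
    show "q \<notin> U"
    proof
      assume "q \<in> U"
      obtain r where r: "r \<in> Cond" "cext r q" "r \<in> bneg U" using h q by blast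
      then have "r \<in> U" using assms \<open>q \<in> U\<close> opnD by blast
      then show False using r(3) by (auto simp: bneg_def)
    qed
  qed
qed

lemma bneg_disj: "p \<in> bneg U \<Longrightarrow> p \<notin> U"
  by (auto simp: bneg_def)

lemma RO_Int: assumes "U \<in> RO" "V \<in> RO" shows "U \<inter> V \<in> RO"
  unfolding RO_def
proof (intro CollectI conjI ballI impI)
  show "U \<inter> V \<subseteq> Cond" using assms RO_sub by auto
next
  fix p q assume "p \<in> U \<inter> V" "q \<in> Cond" "cext q p"
  then show "q \<in> U \<inter> V" using assms RO_opn opnD by blast
next
  fix p assume p: "p \<in> Cond" and h: "\<forall>q\<in>Cond. cext q p \<longrightarrow> (\<exists>r\<in>Cond. cext r q \<and> r \<in> U \<inter> V)"
  have "\<forall>q\<in>Cond. cext q p \<longrightarrow> (\<exists>r\<in>Cond. cext r q \<and> r \<in> U)" using h by blast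
  moreover have "\<forall>q\<in>Cond. cext q p \<longrightarrow> (\<exists>r\<in>Cond. cext r q \<and> r \<in> V)" using h by blast
  ultimately show "p \<in> U \<inter> V" using RO_reg[OF assms(1) p] RO_reg[OF assms(2) p] by blast
qed

lemma Cond_RO: "Cond \<in> RO"
  unfolding RO_def by blast

lemma empty_RO: "{} \<in> RO"
  unfolding RO_def using cext_refl by blast

lemma opn_Int: "opn U \<Longrightarrow> opn V \<Longrightarrow> opn (U \<inter> V)"
  by (auto simp: opn_def)

lemma opn_binf: "\<forall>U\<in>S. opn U \<Longrightarrow> opn (binf S)"
  unfolding opn_def binf_def by blast

lemma opn_bsubset: "opn (bsubset X Y)"
  unfolding bsubset_def bimp_def by (rule opn_binf) (auto intro: RO_opn bsup_RO)

lemma opn_beq: "opn (beq X Y)"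
  unfolding beq_def using opn_bsubset opn_Int by blast



definition tmap :: "(bool list \<Rightarrow> bool) \<Rightarrow> bool list \<Rightarrow> bool list" where
  "tmap a l = map (\<lambda>i. l!i \<noteq> a (take i l)) [0..<length l]"

definition tinv :: "(bool list \<Rightarrow> bool) \<Rightarrow> bool list \<Rightarrow> bool list" where
  "tinv a l = foldl (\<lambda>acc c. acc @ [c \<noteq> a acc]) [] l"

lemma tmap_length[simp]: "length (tmap a l) = length l"
  by (simp add: tmap_def)

lemma tmap_nth: "i < length l \<Longrightarrow> tmap a l ! i = (l!i \<noteq> a (take i l))"
  by (simp add: tmap_def)

lemma tmap_Nil[simp]: "tmap a [] = []"
  by (simp add: tmap_def)

lemma tmap_snoc[simp]: "tmap a (l @ [c]) = tmap a l @ [c \<noteq> a l]"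
  by (rule nth_equalityI) (auto simp: tmap_nth nth_append)

lemma tinv_Nil[simp]: "tinv a [] = []"
  by (simp add: tinv_def)

lemma tinv_snoc[simp]: "tinv a (l @ [c]) = tinv a l @ [c \<noteq> a (tinv a l)]"
  by (simp add: tinv_def)

lemma tmap_tinv[simp]: "tmap a (tinv a l) = l"
  by (induction l rule: rev_induct) auto

lemma tinv_tmap[simp]: "tinv a (tmap a l) = l"
  by (induction l rule: rev_induct) auto

lemma tinv_as_tmap: "tinv a l = tmap (\<lambda>u. a (tinv a u)) l"
  by (induction l rule: rev_induct) auto

lemma tmap_take: "take n (tmap a l) = tmap a (take n l)"
proof (rule nth_equalityI)
  show "length (take n (tmap a l)) = length (tmap a (take n l))" by simp
  fix i assume "i < length (take n (tmap a l))"
  then have i: "i < n" "i < length l" by auto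
  have "take n (tmap a l) ! i = tmap a l ! i" using i by simp
  also have "\<dots> = (l!i \<noteq> a (take i l))" using i by (simp add: tmap_nth)
  also have "\<dots> = tmap a (take n l) ! i" using i by (simp add: tmap_nth take_take min_def)
  finally show "take n (tmap a l) ! i = tmap a (take n l) ! i" .
qed

lemma tmap_inj: "tmap a l = tmap a m \<Longrightarrow> l = m"
  by (metis tinv_tmap)

lemma prefix_take_iff: "prefix l m \<longleftrightarrow> length l \<le> length m \<and> take (length l) m = l"
proof
  assume "prefix l m" then obtain w where "m = l @ w" by (auto simp: prefix_def)
  then show "length l \<le> length m \<and> take (length l) m = l" by simp
next
  assume "length l \<le> length m \<and> take (length l) m = l"
  then show "prefix l m" by (metis take_is_prefix)
qed

lemma tmap_prefix: "prefix l m \<Longrightarrow> prefix (tmap a l) (tmap a m)"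
  by (metis prefix_take_iff tmap_length tmap_take)

lemma tmap_prefix_iff: "prefix (tmap a l) (tmap a m) \<longleftrightarrow> prefix l m"
proof
  assume h: "prefix (tmap a l) (tmap a m)"
  have "length (tmap a l) \<le> length (tmap a m) \<and> take (length (tmap a l)) (tmap a m) = tmap a l"
    using h prefix_take_iff by blast
  then have "length l \<le> length m" "take (length l) (tmap a m) = tmap a l" by simp_all
  then have "tmap a (take (length l) m) = tmap a l" by (simp add: tmap_take)
  then have "take (length l) m = l" by (rule tmap_inj)
  then show "prefix l m" by (metis take_is_prefix)
qed (rule tmap_prefix)

text \<open>The automorphism induced by the tree automorphism tmap a.\<close>

definition Sa :: "(bool list \<Rightarrow> bool) \<Rightarrow> (nat \<rightharpoonup> bool) set \<Rightarrow> (nat \<rightharpoonup> bool) set" where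
  "Sa a U = {p\<in>Cond. \<forall>l. cext (tm l) p \<longrightarrow> tm (tmap a l) \<in> U}"

definition sig :: "(bool list \<Rightarrow> bool) \<Rightarrow> (nat \<rightharpoonup> bool) set \<Rightarrow> (nat \<rightharpoonup> bool) set" where
  "sig a U = (if U \<in> RO then Sa a U else U)"

lemma Sa_sub: "Sa a U \<subseteq> Cond"
  unfolding Sa_def by blast

lemma Sa_node: assumes "opn U" shows "tm l \<in> Sa a U \<longleftrightarrow> tm (tmap a l) \<in> U"
proof
  assume "tm l \<in> Sa a U"
  then show "tm (tmap a l) \<in> U" unfolding Sa_def using cext_refl by blast
next
  assume h: "tm (tmap a l) \<in> U"
  show "tm l \<in> Sa a U" unfolding Sa_def
  proof (intro CollectI conjI tm_Cond allI impI)
    fix m assume "cext (tm m) (tm l)"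
    then have "prefix l m" by (simp add: cext_tm)
    then have "prefix (tmap a l) (tmap a m)" by (rule tmap_prefix)
    then show "tm (tmap a m) \<in> U" using opn_node[OF assms h] by blast
  qed
qed

lemma Sa_opn: "opn (Sa a U)"
  unfolding opn_def Sa_def using cext_trans by blast

lemma Sa_RO: assumes U: "U \<in> RO" shows "Sa a U \<in> RO"
  unfolding RO_def
proof (intro CollectI conjI ballI impI)
  show "Sa a U \<subseteq> Cond" by (rule Sa_sub)
next
  fix p q assume "p \<in> Sa a U" "q \<in> Cond" "cext q p"
  then show "q \<in> Sa a U" using Sa_opn opnD by blast
next
  fix p assume p: "p \<in> Cond" and h: "\<forall>q\<in>Cond. cext q p \<longrightarrow> (\<exists>r\<in>Cond. cext r q \<and> r \<in> Sa a U)"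
  show "p \<in> Sa a U" unfolding Sa_def
  proof (intro CollectI conjI p allI impI)
    fix l assume l: "cext (tm l) p"
    show "tm (tmap a l) \<in> U"
    proof (rule RO_reg[OF U tm_Cond], intro ballI impI)
      fix q' assume q': "q' \<in> Cond" "cext q' (tm (tmap a l))"
      obtain m where m: "prefix (tmap a l) m" "cext (tm m) q'" using node_ext2[OF q'] by blast
      define l' where "l' = tinv a m"
      have tl': "tmap a l' = m" by (simp add: l'_def)
      have "prefix l l'" using m(1) tl' tmap_prefix_iff by metis
      then have "cext (tm l') p" using cext_trans[OF _ l] cext_tm by blast
      then obtain r where r: "r \<in> Cond" "cext r (tm l')" "r \<in> Sa a U" using h tm_Cond by blast
      obtain l'' where l'': "prefix l' l''" "cext (tm l'') r" using node_ext2[OF r(1,2)] by blast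
      have "tm l'' \<in> Sa a U" using opnD[OF Sa_opn r(3) tm_Cond l''(2)] .
      then have in1: "tm (tmap a l'') \<in> U" unfolding Sa_def using cext_refl by blast
      have "prefix m (tmap a l'')" using tmap_prefix[OF l''(1), of a] tl' by simp
      then have "cext (tm (tmap a l'')) q'" using cext_trans[OF _ m(2)] cext_tm by blast
      then show "\<exists>r\<in>Cond. cext r q' \<and> r \<in> U" using in1 tm_Cond by blast
    qed
  qed
qed

lemma opn_nodes_neg:
  assumes "opn W"
  shows "(\<forall>q\<in>Cond. cext q (tm Y) \<longrightarrow> q \<notin> W) \<longleftrightarrow> (\<forall>m. prefix Y m \<longrightarrow> tm m \<notin> W)"
proof
  assume "\<forall>q\<in>Cond. cext q (tm Y) \<longrightarrow> q \<notin> W"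
  then show "\<forall>m. prefix Y m \<longrightarrow> tm m \<notin> W" using cext_tm tm_Cond by blast
next
  assume h: "\<forall>m. prefix Y m \<longrightarrow> tm m \<notin> W"
  show "\<forall>q\<in>Cond. cext q (tm Y) \<longrightarrow> q \<notin> W"
  proof (intro ballI impI notI)
    fix q assume q: "q \<in> Cond" "cext q (tm Y)" "q \<in> W"
    obtain m where m: "prefix Y m" "cext (tm m) q" using node_ext2[OF q(1,2)] by blast
    have "tm m \<in> W" using opnD[OF assms q(3) tm_Cond m(2)] .
    then show False using h m(1) by blast
  qed
qed

lemma bneg_node: "opn W \<Longrightarrow> tm Y \<in> bneg W \<longleftrightarrow> (\<forall>m. prefix Y m \<longrightarrow> tm m \<notin> W)"
  using opn_nodes_neg[of W Y] unfolding bneg_def by auto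

lemma Sa_bneg: assumes U: "U \<in> RO" shows "Sa a (bneg U) = bneg (Sa a U)"
proof (rule RO_eq_nodes)
  show "Sa a (bneg U) \<in> RO" using Sa_RO bneg_RO RO_opn U by blast
  show "bneg (Sa a U) \<in> RO" using bneg_RO Sa_opn by blast
  fix l
  have "tm l \<in> Sa a (bneg U) \<longleftrightarrow> tm (tmap a l) \<in> bneg U" using Sa_node bneg_opn by blast
  also have "\<dots> \<longleftrightarrow> (\<forall>m. prefix (tmap a l) m \<longrightarrow> tm m \<notin> U)" using bneg_node RO_opn[OF U] by blast
  also have "\<dots> \<longleftrightarrow> (\<forall>l'. prefix l l' \<longrightarrow> tm (tmap a l') \<notin> U)"
  proof
    assume "\<forall>m. prefix (tmap a l) m \<longrightarrow> tm m \<notin> U"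
    then show "\<forall>l'. prefix l l' \<longrightarrow> tm (tmap a l') \<notin> U" using tmap_prefix by blast
  next
    assume h: "\<forall>l'. prefix l l' \<longrightarrow> tm (tmap a l') \<notin> U"
    show "\<forall>m. prefix (tmap a l) m \<longrightarrow> tm m \<notin> U"
    proof (intro allI impI)
      fix m assume "prefix (tmap a l) m"
      then have "prefix l (tinv a m)" using tmap_prefix_iff[of a l "tinv a m"] by simp
      then show "tm m \<notin> U" using h[rule_format, of "tinv a m"] by simp
    qed
  qed
  also have "\<dots> \<longleftrightarrow> (\<forall>l'. prefix l l' \<longrightarrow> tm l' \<notin> Sa a U)" using Sa_node RO_opn[OF U] by blast
  also have "\<dots> \<longleftrightarrow> tm l \<in> bneg (Sa a U)" using bneg_node[OF Sa_opn] by blast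
  finally show "tm l \<in> Sa a (bneg U) \<longleftrightarrow> tm l \<in> bneg (Sa a U)" .
qed

lemma Sa_Int: "Sa a (U \<inter> V) = Sa a U \<inter> Sa a V"
  unfolding Sa_def by blast

lemma Sa_Sa:
  assumes U: "U \<in> RO" and inv: "\<And>l. tmap c (tmap a l) = l"
  shows "Sa a (Sa c U) = U"
proof (rule RO_eq_nodes)
  show "Sa a (Sa c U) \<in> RO" using Sa_RO U by blast
  show "U \<in> RO" by (rule U)
  fix l
  have "tm l \<in> Sa a (Sa c U) \<longleftrightarrow> tm (tmap a l) \<in> Sa c U" using Sa_node Sa_opn by blast
  also have "\<dots> \<longleftrightarrow> tm (tmap c (tmap a l)) \<in> U" using Sa_node RO_opn[OF U] by blast
  finally show "tm l \<in> Sa a (Sa c U) \<longleftrightarrow> tm l \<in> U" using inv by simp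
qed

lemma sig_Aut: "sig a \<in> Aut"
proof -
  define c where "c = (\<lambda>u. a (tinv a u))"
  have tc: "tmap c l = tinv a l" for l unfolding c_def by (simp add: tinv_as_tmap[symmetric])
  have inv1: "tmap c (tmap a l) = l" for l by (simp add: tc)
  have inv2: "tmap a (tmap c l) = l" for l by (simp add: tc)
  have bij: "bij_betw (sig a) RO RO"
  proof (rule bij_betw_byWitness[where f' = "sig c"])
    show "\<forall>U\<in>RO. sig c (sig a U) = U"
    proof
      fix U assume U: "U \<in> RO"
      have "Sa c (Sa a U) = U" by (rule Sa_Sa[OF U inv2])
      then show "sig c (sig a U) = U" using U Sa_RO[OF U, of a] unfolding sig_def by simp
    qed
    show "\<forall>U\<in>RO. sig a (sig c U) = U"
    proof
      fix U assume U: "U \<in> RO"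
      have "Sa a (Sa c U) = U" by (rule Sa_Sa[OF U inv1])
      then show "sig a (sig c U) = U" using U Sa_RO[OF U, of c] unfolding sig_def by simp
    qed
    show "sig a ` RO \<subseteq> RO" using Sa_RO unfolding sig_def by auto
    show "sig c ` RO \<subseteq> RO" using Sa_RO unfolding sig_def by auto
  qed
  show ?thesis unfolding Aut_def
  proof (intro CollectI conjI bij ballI allI impI)
    fix U V assume "U \<in> RO" "V \<in> RO"
    then show "sig a (U \<inter> V) = sig a U \<inter> sig a V" using RO_Int Sa_Int unfolding sig_def by simp
  next
    fix U assume U: "U \<in> RO"
    then show "sig a (bneg U) = bneg (sig a U)" using Sa_bneg bneg_RO RO_opn unfolding sig_def by simp
  next
    fix U assume "U \<notin> RO" then show "sig a U = U" unfolding sig_def by simp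
  qed
qed



lemma mv_RO: "mem_val n X \<in> RO"
  unfolding mem_val_def by (rule bsup_RO)

lemma sub_mem_val: assumes "(n, c) \<in> X" "c \<in> RO" shows "c \<subseteq> mem_val n X"
proof
  fix p assume "p \<in> c"
  then show "p \<in> mem_val n X" unfolding mem_val_def
    using bsup_I[of p c "{d. (n, d) \<in> X}"] assms RO_opn RO_sub by blast
qed

lemma bsubset_D: "p \<in> bsubset Y Z \<Longrightarrow> (n, c) \<in> Y \<Longrightarrow> p \<in> bimp c (mem_val n Z)"
  unfolding bsubset_def binf_def by blast

lemma subset_transfer:
  assumes Y: "\<forall>(n, c)\<in>Y. c \<in> RO" and p: "p \<in> bsubset Y Z" and pm: "p \<in> mem_val n Y"
  shows "p \<in> mem_val n Z"
proof -
  have pC: "p \<in> Cond" using pm bsup_sub unfolding mem_val_def by blast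
  show ?thesis
  proof (rule RO_reg[OF mv_RO pC], intro ballI impI)
    fix q assume q: "q \<in> Cond" "cext q p"
    have "p \<in> Cond \<and> (\<forall>q\<in>Cond. cext q p \<longrightarrow> (\<exists>r\<in>Cond. cext r q \<and> r \<in> \<Union>{d. (n, d) \<in> Y}))"
      using pm unfolding mem_val_def bsup_def by (rule CollectD)
    then obtain r1 c where r1: "r1 \<in> Cond" "cext r1 q" "r1 \<in> c" "(n, c) \<in> Y" using q by blast
    have cRO: "c \<in> RO" using Y r1(4) by blast
    have "p \<in> bimp c (mem_val n Z)" using bsubset_D[OF p r1(4)] .
    then have "p \<in> Cond \<and> (\<forall>q\<in>Cond. cext q p \<longrightarrow> (\<exists>r\<in>Cond. cext r q \<and> r \<in> \<Union>{bneg c, mem_val n Z}))"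
      unfolding bimp_def bsup_def by (rule CollectD)
    then obtain r2 where r2: "r2 \<in> Cond" "cext r2 r1" "r2 \<in> bneg c \<union> mem_val n Z"
      using r1 cext_trans[OF r1(2) q(2)] by blast
    have "r2 \<in> c" using opnD[OF RO_opn[OF cRO] r1(3) r2(1,2)] .
    then have "r2 \<notin> bneg c" using bneg_disj by blast
    then have "r2 \<in> mem_val n Z" using r2(3) by blast
    then show "\<exists>r\<in>Cond. cext r q \<and> r \<in> mem_val n Z" using r2(1) cext_trans[OF r2(2) r1(2)] by blast
  qed
qed

lemma name_app_RO: "\<forall>(n, c)\<in>X. c \<in> RO \<Longrightarrow> \<forall>(n, c)\<in>name_app (sig a) X. c \<in> RO"
  unfolding name_app_def sig_def using Sa_RO by auto

lemma mem_val_name_app: "{d. (n, d) \<in> name_app s X} = {s c | c. (n, c) \<in> X}"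
  unfolding name_app_def by auto

lemma claimA:
  assumes X: "\<forall>(n, c)\<in>X. c \<in> RO" and h: "tm (tmap a r) \<in> mem_val n X"
  shows "tm r \<in> mem_val n (name_app (sig a) X)"
  unfolding mem_val_def bsup_def
proof (intro CollectI conjI tm_Cond ballI impI)
  fix q assume q: "q \<in> Cond" "cext q (tm r)"
  obtain l where l: "prefix r l" "cext (tm l) q" using node_ext2[OF q] by blast
  have "tm (tmap a l) \<in> mem_val n X" using opn_node[OF RO_opn[OF mv_RO] h tmap_prefix[OF l(1)]] .
  then have "tm (tmap a l) \<in> Cond \<and> (\<forall>q\<in>Cond. cext q (tm (tmap a l)) \<longrightarrow> (\<exists>r\<in>Cond. cext r q \<and> r \<in> \<Union>{d. (n, d) \<in> X}))"
    unfolding mem_val_def bsup_def by (rule CollectD)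
  then obtain r1 c where r1: "r1 \<in> Cond" "cext r1 (tm (tmap a l))" "r1 \<in> c" "(n, c) \<in> X"
    using cext_refl tm_Cond by blast
  have cRO: "c \<in> RO" using X r1(4) by blast
  obtain m where m: "prefix (tmap a l) m" "cext (tm m) r1" using node_ext2[OF r1(1,2)] by blast
  have mc: "tm m \<in> c" using opnD[OF RO_opn[OF cRO] r1(3) tm_Cond m(2)] .
  define l' where "l' = tinv a m"
  have tl': "tmap a l' = m" by (simp add: l'_def)
  have "prefix l l'" using m(1) tl' tmap_prefix_iff by metis
  then have ext: "cext (tm l') q" using cext_trans[OF _ l(2)] cext_tm by blast
  have "tm l' \<in> Sa a c" using Sa_node[OF RO_opn[OF cRO]] mc tl' by simp
  then have "tm l' \<in> sig a c" using cRO by (simp add: sig_def)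
  moreover have "(n, sig a c) \<in> name_app (sig a) X" using r1(4) unfolding name_app_def by blast
  ultimately show "\<exists>r\<in>Cond. cext r q \<and> r \<in> \<Union>{d. (n, d) \<in> name_app (sig a) X}"
    using ext tm_Cond by blast
qed

lemma claimB:
  assumes X: "\<forall>(n, c)\<in>X. c \<in> RO" and h: "tm (tmap a r) \<in> bneg (mem_val n X)"
  shows "tm r \<in> bneg (mem_val n (name_app (sig a) X))"
proof -
  have hn: "\<forall>m. prefix (tmap a r) m \<longrightarrow> tm m \<notin> mem_val n X"
    using iffD1[OF bneg_node[OF RO_opn[OF mv_RO[of n X]], of "tmap a r"] h] .
  have "\<forall>m. prefix r m \<longrightarrow> tm m \<notin> mem_val n (name_app (sig a) X)"
  proof (intro allI impI notI)
    fix m assume m: "prefix r m" "tm m \<in> mem_val n (name_app (sig a) X)"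
    have "tm m \<in> Cond \<and> (\<forall>q\<in>Cond. cext q (tm m) \<longrightarrow> (\<exists>r\<in>Cond. cext r q \<and> r \<in> \<Union>{d. (n, d) \<in> name_app (sig a) X}))"
      using m(2) unfolding mem_val_def bsup_def by (rule CollectD)
    then obtain r1 d where r1: "r1 \<in> Cond" "cext r1 (tm m)" "r1 \<in> d" "(n, d) \<in> name_app (sig a) X"
      using cext_refl tm_Cond by blast
    have "\<exists>c. (n, c) \<in> X \<and> d = sig a c" using r1(4) unfolding name_app_def by auto
    then obtain c where c: "(n, c) \<in> X" "d = sig a c" by blast
    have cRO: "c \<in> RO" using X c(1) by blast
    have dS: "d = Sa a c" using c(2) cRO by (simp add: sig_def)
    obtain l where l: "prefix m l" "cext (tm l) r1" using node_ext2[OF r1(1,2)] by blast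
    have "tm l \<in> Sa a c" using opnD[OF Sa_opn _ tm_Cond l(2)] r1(3) dS by blast
    then have "tm (tmap a l) \<in> c" using Sa_node[OF RO_opn[OF cRO]] by blast
    then have "tm (tmap a l) \<in> mem_val n X" using sub_mem_val[OF c(1) cRO] by blast
    moreover have "prefix (tmap a r) (tmap a l)" using tmap_prefix prefix_order.trans[OF m(1) l(1)] by blast
    ultimately show False using hn by blast
  qed
  then show ?thesis using iffD2[OF bneg_node[OF RO_opn[OF mv_RO[of n "name_app (sig a) X"]], of r]] by blast
qed

definition good :: "('a \<times> (nat \<rightharpoonup> bool) set) set \<Rightarrow> bool list \<Rightarrow> bool list \<Rightarrow> bool" where
  "good X z1 z2 \<longleftrightarrow> (\<exists>n. (tm z1 \<in> mem_val n X \<and> tm z2 \<in> bneg (mem_val n X))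
                        \<or> (tm z1 \<in> bneg (mem_val n X) \<and> tm z2 \<in> mem_val n X))"

lemma final_prop:
  assumes X: "\<forall>(n, c)\<in>X. c \<in> RO" and b: "b \<in> RO"
    and key: "\<forall>q. tm q \<in> b \<longrightarrow> (\<exists>r. prefix q r \<and> good X (tmap a1 r) (tmap a2 r))"
  shows "b \<subseteq> bneg (beq (name_app (sig a1) X) (name_app (sig a2) X))"
proof -
  let ?Y = "name_app (sig a1) X" and ?Z = "name_app (sig a2) X"
  have Y: "\<forall>(n, c)\<in>?Y. c \<in> RO" and Z: "\<forall>(n, c)\<in>?Z. c \<in> RO" using name_app_RO[OF X] by blast+
  have noq: "tm q \<notin> beq ?Y ?Z" if q: "tm q \<in> b" for q
  proof
    assume qe: "tm q \<in> beq ?Y ?Z"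
    obtain r n where r: "prefix q r" and g: "(tm (tmap a1 r) \<in> mem_val n X \<and> tm (tmap a2 r) \<in> bneg (mem_val n X))
                        \<or> (tm (tmap a1 r) \<in> bneg (mem_val n X) \<and> tm (tmap a2 r) \<in> mem_val n X)"
      using key q unfolding good_def by blast
    have re: "tm r \<in> beq ?Y ?Z" using opn_node[OF opn_beq qe r] .
    then have r1: "tm r \<in> bsubset ?Y ?Z" and r2: "tm r \<in> bsubset ?Z ?Y" unfolding beq_def by auto
    from g show False
    proof
      assume g1: "tm (tmap a1 r) \<in> mem_val n X \<and> tm (tmap a2 r) \<in> bneg (mem_val n X)"
      have "tm r \<in> mem_val n ?Y" using claimA[OF X] g1 by blast
      then have "tm r \<in> mem_val n ?Z" using subset_transfer[OF Y r1] by blast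
      moreover have "tm r \<in> bneg (mem_val n ?Z)" using claimB[OF X] g1 by blast
      ultimately show False using bneg_disj by blast
    next
      assume g2: "tm (tmap a1 r) \<in> bneg (mem_val n X) \<and> tm (tmap a2 r) \<in> mem_val n X"
      have "tm r \<in> mem_val n ?Z" using claimA[OF X] g2 by blast
      then have "tm r \<in> mem_val n ?Y" using subset_transfer[OF Z r2] by blast
      moreover have "tm r \<in> bneg (mem_val n ?Y)" using claimB[OF X] g2 by blast
      ultimately show False using bneg_disj by blast
    qed
  qed
  show ?thesis
  proof
    fix p assume p: "p \<in> b"
    have pC: "p \<in> Cond" using p RO_sub[OF b] by blast
    show "p \<in> bneg (beq ?Y ?Z)" unfolding bneg_def
    proof (intro CollectI conjI pC ballI impI notI)
      fix q assume q: "q \<in> Cond" "cext q p" "q \<in> beq ?Y ?Z"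
      obtain l where l: "cext (tm l) q" using node_ext1[OF q(1)] by blast
      have "tm l \<in> b" using opnD[OF RO_opn[OF b] p tm_Cond cext_trans[OF l q(2)]] .
      moreover have "tm l \<in> beq ?Y ?Z" using opnD[OF opn_beq q(3) tm_Cond l] .
      ultimately show False using noq by blast
    qed
  qed
qed



lemma two_nodes:
  assumes p1: "p1 \<in> Cond" "cext p1 (tm Y1)" "p1 \<in> A" "opn A"
      and p2: "p2 \<in> Cond" "cext p2 (tm Y2)" "p2 \<in> B" "opn B"
  shows "\<exists>K. \<forall>N\<ge>K. \<exists>z1 z2. length z1 = N \<and> length z2 = N \<and> prefix Y1 z1 \<and> prefix Y2 z2 \<and> tm z1 \<in> A \<and> tm z2 \<in> B"
proof -
  obtain K1 where K1: "\<forall>N\<ge>K1. \<exists>l. length l = N \<and> prefix Y1 l \<and> cext (tm l) p1" using node_ext[OF p1(1,2)] by blast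
  obtain K2 where K2: "\<forall>N\<ge>K2. \<exists>l. length l = N \<and> prefix Y2 l \<and> cext (tm l) p2" using node_ext[OF p2(1,2)] by blast
  show ?thesis
  proof (rule exI[of _ "max K1 K2"], intro allI impI)
    fix N assume N: "max K1 K2 \<le> N"
    obtain z1 where z1: "length z1 = N" "prefix Y1 z1" "cext (tm z1) p1" using K1 N by auto
    obtain z2 where z2: "length z2 = N" "prefix Y2 z2" "cext (tm z2) p2" using K2 N by auto
    have "tm z1 \<in> A" using opnD[OF p1(4,3) tm_Cond z1(3)] .
    moreover have "tm z2 \<in> B" using opnD[OF p2(4,3) tm_Cond z2(3)] .
    ultimately show "\<exists>z1 z2. length z1 = N \<and> length z2 = N \<and> prefix Y1 z1 \<and> prefix Y2 z2 \<and> tm z1 \<in> A \<and> tm z2 \<in> B"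
      using z1 z2 by blast
  qed
qed

lemma tm_Nil_ext: "cext p (tm [])"
  by (simp add: cext_def map_le_def tm_def dom_def)

lemma check_mem: "{d. (n, d) \<in> check y} = (if n \<in> y then {Cond} else {})"
  unfolding check_def btop_def by auto

lemma undecided:
  assumes X: "\<forall>(n, c)\<in>X. c \<in> RO"
    and ng: "bsup {beq X (check y) | y :: 'a set. True} = {}"
  shows "\<exists>n::'a. tm Y \<notin> mem_val n X \<and> tm Y \<notin> bneg (mem_val n X)"
proof (rule ccontr)
  assume "\<not> ?thesis"
  then have dec: "\<forall>n. tm Y \<in> mem_val n X \<or> tm Y \<in> bneg (mem_val n X)" by blast
  define y where "y = {n. tm Y \<in> mem_val n X}"
  have s1: "tm Y \<in> bsubset X (check y)"
    unfolding bsubset_def binf_def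
  proof (intro IntI tm_Cond InterI)
    fix W assume "W \<in> {bimp c (mem_val n (check y)) | n c. (n, c) \<in> X}"
    then obtain n c where W: "W = bimp c (mem_val n (check y))" "(n, c) \<in> X" by blast
    have cRO: "c \<in> RO" using X W(2) by blast
    show "tm Y \<in> W"
    proof (cases "n \<in> y")
      case True
      then have "mem_val n (check y) = Cond" unfolding mem_val_def using check_mem[of n y] bsup_Cond by simp
      then show ?thesis unfolding W bimp_def using bsup_I[of "tm Y" Cond] Cond_RO RO_opn by simp
    next
      case False
      then have "tm Y \<in> bneg (mem_val n X)" using dec y_def by blast
      then have "tm Y \<in> bneg c" using sub_mem_val[OF W(2) cRO] unfolding bneg_def by blast
      then show ?thesis unfolding W bimp_def using bsup_I[of "tm Y" "bneg c"] bneg_opn by simp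
    qed
  qed
  have s2: "tm Y \<in> bsubset (check y) X"
    unfolding bsubset_def binf_def
  proof (intro IntI tm_Cond InterI)
    fix W assume "W \<in> {bimp c (mem_val n X) | n c. (n, c) \<in> check y}"
    then obtain n c where W: "W = bimp c (mem_val n X)" "(n, c) \<in> check y" by blast
    have "n \<in> y" using W(2) unfolding check_def by blast
    then have "tm Y \<in> mem_val n X" using y_def by blast
    then show "tm Y \<in> W" unfolding W bimp_def
      by (intro bsup_I[OF tm_Cond _ RO_opn[OF mv_RO]]) auto
  qed
  have "tm Y \<in> beq X (check y)" using s1 s2 unfolding beq_def by blast
  then have "tm Y \<in> bsup {beq X (check y) | y :: 'a set. True}"
    by (intro bsup_I[OF tm_Cond _ opn_beq]) blast
  then show False using ng by simp
qed

lemma two_cone: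
  assumes X: "\<forall>(n, c)\<in>X. c \<in> RO"
    and ng: "bsup {beq X (check y) | y :: 'a set. True} = {}"
  shows "\<exists>K. \<forall>N\<ge>K. \<exists>z1 z2. length z1 = N \<and> length z2 = N \<and> prefix Y1 z1 \<and> prefix Y2 z2 \<and> good X z1 z2"
proof -
  obtain n :: 'a where n: "tm Y2 \<notin> mem_val n X" "tm Y2 \<notin> bneg (mem_val n X)" using undecided[OF X ng] by blast
  let ?M = "mem_val n X"
  have oM: "opn ?M" using RO_opn[OF mv_RO] .
  have oN: "opn (bneg ?M)" by (rule bneg_opn)
  have "\<not> (\<forall>q\<in>Cond. cext q (tm Y2) \<longrightarrow> q \<notin> ?M)"
    using n(2) tm_Cond[of Y2] unfolding bneg_def by blast
  then obtain qa where qa: "qa \<in> Cond" "cext qa (tm Y2)" "qa \<in> ?M" by blast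
  have "\<not> (\<forall>q\<in>Cond. cext q (tm Y2) \<longrightarrow> (\<exists>r\<in>Cond. cext r q \<and> r \<in> ?M))"
    using n(1) RO_reg[OF mv_RO[of n X] tm_Cond[of Y2]] by blast
  then obtain qb where qb: "qb \<in> Cond" "cext qb (tm Y2)" "\<forall>r\<in>Cond. cext r qb \<longrightarrow> r \<notin> ?M" by blast
  then have qb': "qb \<in> bneg ?M" unfolding bneg_def by blast
  have good_of: "good X z1 z2" if "(tm z1 \<in> ?M \<and> tm z2 \<in> bneg ?M) \<or> (tm z1 \<in> bneg ?M \<and> tm z2 \<in> ?M)" for z1 z2
    unfolding good_def using that by (intro exI[of _ n])
  show ?thesis
  proof (cases "tm Y1 \<in> bneg ?M")
    case True
    obtain K where K: "\<forall>N\<ge>K. \<exists>z1 z2. length z1 = N \<and> length z2 = N \<and> prefix Y1 z1 \<and> prefix Y2 z2 \<and> tm z1 \<in> bneg ?M \<and> tm z2 \<in> ?M"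
      using two_nodes[OF tm_Cond cext_refl True oN qa oM] by blast
    show ?thesis
    proof (rule exI[of _ K], intro allI impI)
      fix N assume "K \<le> N"
      then obtain z1 z2 where z: "length z1 = N" "length z2 = N" "prefix Y1 z1" "prefix Y2 z2" "tm z1 \<in> bneg ?M" "tm z2 \<in> ?M"
        using K by blast
      then show "\<exists>z1 z2. length z1 = N \<and> length z2 = N \<and> prefix Y1 z1 \<and> prefix Y2 z2 \<and> good X z1 z2"
        using good_of[of z1 z2] by blast
    qed
  next
    case False
    then have "\<not> (\<forall>q\<in>Cond. cext q (tm Y1) \<longrightarrow> q \<notin> ?M)"
      using tm_Cond[of Y1] unfolding bneg_def by blast
    then obtain q1 where q1: "q1 \<in> Cond" "cext q1 (tm Y1)" "q1 \<in> ?M" by blast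
    obtain K where K: "\<forall>N\<ge>K. \<exists>z1 z2. length z1 = N \<and> length z2 = N \<and> prefix Y1 z1 \<and> prefix Y2 z2 \<and> tm z1 \<in> ?M \<and> tm z2 \<in> bneg ?M"
      using two_nodes[OF q1 oM qb(1,2) qb' oN] by blast
    show ?thesis
    proof (rule exI[of _ K], intro allI impI)
      fix N assume "K \<le> N"
      then obtain z1 z2 where z: "length z1 = N" "length z2 = N" "prefix Y1 z1" "prefix Y2 z2" "tm z1 \<in> ?M" "tm z2 \<in> bneg ?M"
        using K by blast
      then show "\<exists>z1 z2. length z1 = N \<and> length z2 = N \<and> prefix Y1 z1 \<and> prefix Y2 z2 \<and> good X z1 z2"
        using good_of[of z1 z2] by blast
    qed
  qed
qed

lemma tmap_supp:
  assumes b: "b \<in> RO" and supp: "\<And>u. a u \<Longrightarrow> tm u \<in> b"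
  shows "(tm (tmap a l) \<in> b \<longleftrightarrow> tm l \<in> b) \<and> (tm l \<notin> b \<longrightarrow> tmap a l = l)"
proof (induction l rule: rev_induct)
  case Nil then show ?case by simp
next
  case (snoc c l)
  have ob: "opn b" using RO_opn[OF b] .
  show ?case
  proof (cases "tm l \<in> b")
    case True
    then have "tm (tmap a l) \<in> b" using snoc by blast
    then have "tm (tmap a (l @ [c])) \<in> b" using opn_node[OF ob] by simp
    moreover have "tm (l @ [c]) \<in> b" using opn_node[OF ob True] by simp
    ultimately show ?thesis by blast
  next
    case False
    then have "tmap a l = l" "\<not> a l" using snoc supp by blast+
    then show ?thesis by simp
  qed
qed

lemma sig_fix:
  assumes b: "b \<in> RO" and supp: "\<And>u. a u \<Longrightarrow> tm u \<in> b"
  shows "sig a b = b"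
proof -
  have "Sa a b = b"
  proof (rule RO_eq_nodes[OF Sa_RO[OF b] b])
    fix l show "tm l \<in> Sa a b \<longleftrightarrow> tm l \<in> b"
      using Sa_node[OF RO_opn[OF b]] tmap_supp[OF b supp] by blast
  qed
  then show ?thesis using b by (simp add: sig_def)
qed

lemma sig_empty: "sig a {} = {}"
proof -
  have "Sa a {} = {}"
  proof -
    { fix p assume p: "p \<in> Sa a {}"
      then have "p \<in> Cond" using Sa_sub by blast
      then obtain l where "cext (tm l) p" using node_ext1 by blast
      then have False using p unfolding Sa_def by blast }
    then show ?thesis by blast
  qed
  then show ?thesis using empty_RO by (simp add: sig_def)
qed

lemma sig_distinct:
  assumes X: "\<forall>(n, c)\<in>X. c \<in> RO" and g: "good X (tmap a1 r) (tmap a2 r)"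
  shows "sig a1 \<noteq> sig a2"
proof
  assume eq: "sig a1 = sig a2"
  from g obtain n where g': "(tm (tmap a1 r) \<in> mem_val n X \<and> tm (tmap a2 r) \<in> bneg (mem_val n X))
                        \<or> (tm (tmap a1 r) \<in> bneg (mem_val n X) \<and> tm (tmap a2 r) \<in> mem_val n X)"
    unfolding good_def by blast
  then show False
  proof
    assume h: "tm (tmap a1 r) \<in> mem_val n X \<and> tm (tmap a2 r) \<in> bneg (mem_val n X)"
    have "tm r \<in> mem_val n (name_app (sig a1) X)" using claimA[OF X] h by blast
    moreover have "tm r \<in> bneg (mem_val n (name_app (sig a2) X))" using claimB[OF X] h by blast
    ultimately show False using eq bneg_disj by metis
  next
    assume h: "tm (tmap a1 r) \<in> bneg (mem_val n X) \<and> tm (tmap a2 r) \<in> mem_val n X"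
    have "tm r \<in> mem_val n (name_app (sig a2) X)" using claimA[OF X] h by blast
    moreover have "tm r \<in> bneg (mem_val n (name_app (sig a1) X))" using claimB[OF X] h by blast
    ultimately show False using eq bneg_disj by metis
  qed
qed

lemma uncountable_funs: "uncountable (UNIV :: (nat \<Rightarrow> bool) set)"
proof -
  have "\<not> (\<exists>f::nat \<Rightarrow> nat \<Rightarrow> bool. range f = UNIV)"
  proof
    assume "\<exists>f::nat \<Rightarrow> nat \<Rightarrow> bool. range f = UNIV"
    then obtain f :: "nat \<Rightarrow> nat \<Rightarrow> bool" where f: "range f = UNIV" by blast
    then obtain k where "f k = (\<lambda>n. \<not> f n n)" by (metis UNIV_I imageE)
    then have "f k k = (\<not> f k k)" by (rule fun_cong)
    then show False by simp
  qed
  then show ?thesis unfolding uncountable_def by simp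
qed



definition ext :: "bool list \<Rightarrow> nat \<Rightarrow> bool" where "ext s i = (i < length s \<and> s ! i)"
definition pre :: "nat \<Rightarrow> (nat \<Rightarrow> bool) \<Rightarrow> bool list" where "pre j f = map f [0..<j]"
definition qn :: "nat \<Rightarrow> bool list" where "qn j = from_nat (fst (prod_decode j))"
definition beta :: "nat \<Rightarrow> nat \<Rightarrow> bool list \<Rightarrow> bool list \<Rightarrow> bool list" where
  "beta j E s s' = qn j @ replicate E False @ s @ s'"

type_synonym flipfam = "(nat \<Rightarrow> bool) \<Rightarrow> bool list \<Rightarrow> bool"

definition Zok :: "(bool list \<Rightarrow> bool list \<Rightarrow> bool) \<Rightarrow> nat \<Rightarrow> nat \<Rightarrow> flipfam \<Rightarrow> nat
   \<Rightarrow> bool list \<Rightarrow> bool list \<Rightarrow> bool list \<times> bool list \<Rightarrow> bool" where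
  "Zok G j E P L s s' zz \<longleftrightarrow> length (fst zz) = length (beta j E s s') + L \<and> length (snd zz) = length (beta j E s s') + L
     \<and> prefix (tmap (P (ext s)) (beta j E s s')) (fst zz) \<and> prefix (tmap (P (ext s')) (beta j E s s')) (snd zz)
     \<and> G (fst zz) (snd zz)"

definition okL :: "(bool list \<Rightarrow> bool list \<Rightarrow> bool) \<Rightarrow> nat \<Rightarrow> nat \<Rightarrow> flipfam \<Rightarrow> nat \<Rightarrow> bool" where
  "okL G j E P L \<longleftrightarrow> (\<forall>s s'. length s = j \<longrightarrow> length s' = j \<longrightarrow> s \<noteq> s' \<longrightarrow> (\<exists>zz. Zok G j E P L s s' zz))"

definition Lsel where "Lsel G j E P = (SOME L. okL G j E P L)"
definition Zsel where "Zsel G j E P s s' = (SOME zz. Zok G j E P (Lsel G j E P) s s' zz)"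

definition newf :: "(bool list \<Rightarrow> bool) \<Rightarrow> (bool list \<Rightarrow> bool list \<Rightarrow> bool) \<Rightarrow> nat \<Rightarrow> nat \<Rightarrow> flipfam \<Rightarrow> flipfam" where
  "newf Bn G j E P f u \<longleftrightarrow> Bn (qn j @ replicate E False) \<and>
     (\<exists>s s' k. length s = j \<and> length s' = j \<and> s \<noteq> s' \<and> k < Lsel G j E P \<and> u = beta j E s s' @ replicate k False
       \<and> ((pre j f = s \<and> fst (Zsel G j E P s s') ! (length (beta j E s s') + k))
          \<or> (pre j f = s' \<and> snd (Zsel G j E P s s') ! (length (beta j E s s') + k))))"

primrec stg :: "(bool list \<Rightarrow> bool) \<Rightarrow> (bool list \<Rightarrow> bool list \<Rightarrow> bool) \<Rightarrow> nat \<Rightarrow> nat \<times> flipfam" where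
  "stg Bn G 0 = (0, \<lambda>f u. False)"
| "stg Bn G (Suc j) = (length (qn j) + fst (stg Bn G j) + 2 * j + Lsel G j (fst (stg Bn G j)) (snd (stg Bn G j)) + 1,
      \<lambda>f u. snd (stg Bn G j) f u \<or> newf Bn G j (fst (stg Bn G j)) (snd (stg Bn G j)) f u)"

abbreviation "EE Bn G j \<equiv> fst (stg Bn G j)"
abbreviation "PH Bn G j \<equiv> snd (stg Bn G j)"

definition aflip :: "(bool list \<Rightarrow> bool) \<Rightarrow> (bool list \<Rightarrow> bool list \<Rightarrow> bool) \<Rightarrow> flipfam" where
  "aflip Bn G f u = PH Bn G (Suc (length u)) f u"

lemma EE_Suc: "EE Bn G (Suc j) = length (qn j) + EE Bn G j + 2 * j + Lsel G j (EE Bn G j) (PH Bn G j) + 1"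
  by simp

lemma PH_Suc: "PH Bn G (Suc j) f u = (PH Bn G j f u \<or> newf Bn G j (EE Bn G j) (PH Bn G j) f u)"
  by simp

lemma EE_ge: "j \<le> EE Bn G j"
  by (induction j) auto

lemma EE_mono: "i \<le> j \<Longrightarrow> EE Bn G i \<le> EE Bn G j"
proof (induction j)
  case 0 then show ?case by simp
next
  case (Suc j) then show ?case by (cases "i = Suc j") (auto simp: le_Suc_eq)
qed

lemma newf_len:
  assumes "newf Bn G j E P f u"
  shows "length (qn j) + E + 2 * j \<le> length u \<and> length u < length (qn j) + E + 2 * j + Lsel G j E P"
  using assms unfolding newf_def beta_def by auto

lemma PH_len: "PH Bn G j f u \<Longrightarrow> length u < EE Bn G j"
proof (induction j)
  case 0 then show ?case by simp
next
  case (Suc j)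
  have E: "EE Bn G (Suc j) = length (qn j) + EE Bn G j + 2 * j + Lsel G j (EE Bn G j) (PH Bn G j) + 1"
    by (rule EE_Suc)
  have "PH Bn G j f u \<or> newf Bn G j (EE Bn G j) (PH Bn G j) f u" using Suc.prems by (simp only: PH_Suc)
  then show ?case
  proof
    assume "PH Bn G j f u"
    then have "length u < EE Bn G j" by (rule Suc.IH)
    then show ?thesis unfolding E by linarith
  next
    assume "newf Bn G j (EE Bn G j) (PH Bn G j) f u"
    from newf_len[OF this] show ?thesis unfolding E by linarith
  qed
qed

lemma PH_stable: "i \<le> j \<Longrightarrow> length u < EE Bn G i \<Longrightarrow> PH Bn G j f u = PH Bn G i f u"
proof (induction j)
  case 0 then show ?case by simp
next
  case (Suc j)
  show ?case
  proof (cases "i = Suc j")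
    case True then show ?thesis by simp
  next
    case False
    then have ij: "i \<le> j" using Suc.prems by simp
    have "EE Bn G i \<le> EE Bn G j" using EE_mono[OF ij] .
    then have nn: "\<not> newf Bn G j (EE Bn G j) (PH Bn G j) f u"
      using newf_len[of Bn G j "EE Bn G j" "PH Bn G j" f u] Suc.prems(2) by linarith
    have "PH Bn G (Suc j) f u = (PH Bn G j f u \<or> newf Bn G j (EE Bn G j) (PH Bn G j) f u)" by (rule PH_Suc)
    also have "\<dots> = PH Bn G j f u" using nn by blast
    also have "\<dots> = PH Bn G i f u" using Suc.IH[OF ij Suc.prems(2)] .
    finally show ?thesis .
  qed
qed

lemma aflip_eq: "length u < EE Bn G j \<Longrightarrow> aflip Bn G f u = PH Bn G j f u"
proof -
  assume h: "length u < EE Bn G j"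
  let ?J = "Suc (length u)"
  have hJ: "length u < EE Bn G ?J" using EE_ge[of ?J Bn G] by linarith
  have "PH Bn G (max ?J j) f u = PH Bn G ?J f u" by (rule PH_stable[OF _ hJ]) simp
  moreover have "PH Bn G (max ?J j) f u = PH Bn G j f u" by (rule PH_stable[OF _ h]) simp
  ultimately show ?thesis unfolding aflip_def by simp
qed

lemma pre_Suc: "pre (Suc j) f = pre j f @ [f j]"
  by (simp add: pre_def)

lemma pre_length[simp]: "length (pre j f) = j"
  by (simp add: pre_def)

lemma pre_ext: "length s = j \<Longrightarrow> pre j (ext s) = s"
  by (rule nth_equalityI) (auto simp: pre_def ext_def)

lemma PH_pre: "pre j f = pre j g \<Longrightarrow> PH Bn G j f u = PH Bn G j g u"
proof (induction j arbitrary: u)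
  case 0 then show ?case by simp
next
  case (Suc j)
  have pj: "pre j f = pre j g" using Suc.prems by (simp add: pre_Suc)
  have "newf Bn G j (EE Bn G j) (PH Bn G j) f u = newf Bn G j (EE Bn G j) (PH Bn G j) g u"
    by (simp only: newf_def pj)
  then show ?case using Suc.IH[OF pj, of u] by (simp only: PH_Suc)
qed

lemma PH_supp:
  assumes mono: "\<And>l m. Bn l \<Longrightarrow> prefix l m \<Longrightarrow> Bn m"
  shows "PH Bn G j f u \<Longrightarrow> Bn u"
proof (induction j)
  case 0 then show ?case by simp
next
  case (Suc j)
  show ?case
  proof (cases "PH Bn G j f u")
    case True then show ?thesis using Suc.IH by blast
  next
    case False
    then have "newf Bn G j (EE Bn G j) (PH Bn G j) f u" using Suc.prems by (simp only: PH_Suc) simp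
    then obtain s s' k where w: "Bn (qn j @ replicate (EE Bn G j) False)" "u = beta j (EE Bn G j) s s' @ replicate k False"
      unfolding newf_def by blast
    have "prefix (qn j @ replicate (EE Bn G j) False) u" unfolding w(2) beta_def prefix_def by auto
    then show ?thesis using mono[OF w(1)] by blast
  qed
qed

lemma aflip_supp:
  assumes mono: "\<And>l m. Bn l \<Longrightarrow> prefix l m \<Longrightarrow> Bn m"
  shows "aflip Bn G f u \<Longrightarrow> Bn u"
  unfolding aflip_def by (rule PH_supp[where Bn=Bn, OF mono])

lemma fin_unif:
  fixes Q :: "'a \<Rightarrow> nat \<Rightarrow> bool"
  assumes "finite P" "\<forall>p\<in>P. \<exists>K. \<forall>L\<ge>K. Q p L"
  shows "\<exists>L. \<forall>p\<in>P. Q p L"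
proof -
  from bchoice[OF assms(2)] obtain K where K: "\<forall>p\<in>P. \<forall>L\<ge>K p. Q p L" by (rule exE)
  let ?L = "Max (insert 0 (K ` P))"
  have "\<forall>p\<in>P. K p \<le> ?L" using assms(1) by (simp add: Max_ge)
  then show ?thesis using K by blast
qed

lemma finite_pairs: "finite {(s, s'). length s = (j::nat) \<and> length s' = j \<and> s \<noteq> (s'::bool list)}"
proof -
  have f: "finite {xs :: bool list. length xs = j}"
    using finite_lists_length_eq[of "UNIV :: bool set" j] by simp
  have "{(s, s'). length s = j \<and> length s' = j \<and> s \<noteq> (s'::bool list)} \<subseteq> {xs :: bool list. length xs = j} \<times> {xs. length xs = j}"
    by auto
  then show ?thesis using finite_subset f by blast
qed

lemma okL_Lsel:
  assumes H: "\<forall>Y1 Y2. \<exists>K. \<forall>N\<ge>K. \<exists>z1 z2. length z1 = N \<and> length z2 = N \<and> prefix Y1 z1 \<and> prefix Y2 z2 \<and> G z1 z2"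
  shows "okL G j E P (Lsel G j E P)"
proof -
  let ?Pr = "{(s, s'). length s = j \<and> length s' = j \<and> s \<noteq> (s'::bool list)}"
  have all: "\<exists>K. \<forall>L\<ge>K. \<exists>zz. Zok G j E P L s s' zz" for s s'
  proof -
    let ?b = "beta j E s s'"
    obtain K where K: "\<forall>N\<ge>K. \<exists>z1 z2. length z1 = N \<and> length z2 = N \<and> prefix (tmap (P (ext s)) ?b) z1
         \<and> prefix (tmap (P (ext s')) ?b) z2 \<and> G z1 z2" using H by blast
    have "\<forall>L\<ge>K. \<exists>zz. Zok G j E P L s s' zz"
    proof (intro allI impI)
      fix L assume "K \<le> L"
      then have "K \<le> length ?b + L" by simp
      then obtain z1 z2 where z: "length z1 = length ?b + L" "length z2 = length ?b + L" "prefix (tmap (P (ext s)) ?b) z1"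
         "prefix (tmap (P (ext s')) ?b) z2" "G z1 z2" using K by blast
      then have "Zok G j E P L s s' (z1, z2)" unfolding Zok_def by simp
      then show "\<exists>zz. Zok G j E P L s s' zz" by blast
    qed
    then show ?thesis by blast
  qed
  have "\<forall>p\<in>?Pr. \<exists>K. \<forall>L\<ge>K. (\<lambda>p L. \<exists>zz. Zok G j E P L (fst p) (snd p) zz) p L"
  proof
    fix p :: "bool list \<times> bool list"
    show "\<exists>K. \<forall>L\<ge>K. (\<lambda>p L. \<exists>zz. Zok G j E P L (fst p) (snd p) zz) p L" using all[of "fst p" "snd p"] by simp
  qed
  from fin_unif[OF finite_pairs[of j] this] obtain L where
    L: "\<forall>p\<in>?Pr. \<exists>zz. Zok G j E P L (fst p) (snd p) zz" by blast
  have "okL G j E P L" unfolding okL_def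
  proof (intro allI impI)
    fix s s' :: "bool list" assume "length s = j" "length s' = j" "s \<noteq> s'"
    then have "(s, s') \<in> ?Pr" by simp
    then show "\<exists>zz. Zok G j E P L s s' zz" using L by fastforce
  qed
  then show ?thesis unfolding Lsel_def by (rule someI)
qed

lemma Zok_Zsel:
  assumes H: "\<forall>Y1 Y2. \<exists>K. \<forall>N\<ge>K. \<exists>z1 z2. length z1 = N \<and> length z2 = N \<and> prefix Y1 z1 \<and> prefix Y2 z2 \<and> G z1 z2"
    and "length s = j" "length s' = j" "s \<noteq> s'"
  shows "Zok G j E P (Lsel G j E P) s s' (Zsel G j E P s s')"
proof -
  have "\<exists>zz. Zok G j E P (Lsel G j E P) s s' zz" using okL_Lsel[OF H] assms(2-4) unfolding okL_def by blast
  then show ?thesis unfolding Zsel_def by (rule someI_ex)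
qed

lemma beta_uniq:
  assumes "beta j E s s' @ replicate k False = beta j E s2 s2' @ replicate k2 False"
    "length s = j" "length s' = j" "length s2 = j" "length s2' = j"
  shows "s2 = s \<and> s2' = s' \<and> k2 = k"
proof -
  have "s @ s' @ replicate k False = s2 @ s2' @ replicate k2 False" using assms(1) unfolding beta_def by simp
  then have "s = s2" "s' @ replicate k False = s2' @ replicate k2 False" using assms(2,4)
    by (simp_all add: append_eq_append_conv)
  then have "s' = s2'" "replicate k False = replicate k2 (False::bool)" using assms(3,5)
    by (simp_all add: append_eq_append_conv)
  then show ?thesis using \<open>s = s2\<close> by simp
qed

lemma stage_side:
  assumes H: "\<forall>Y1 Y2. \<exists>K. \<forall>N\<ge>K. \<exists>z1 z2. length z1 = N \<and> length z2 = N \<and> prefix Y1 z1 \<and> prefix Y2 z2 \<and> G z1 z2"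
    and mono: "\<And>l m. Bn l \<Longrightarrow> prefix l m \<Longrightarrow> Bn m"
    and Bq: "Bn (qn j)"
    and s: "length s = j" "length s' = j" "s \<noteq> s'"
    and h: "pre j h = t" "t = s \<or> t = s'"
    and z: "z = (if t = s then fst (Zsel G j (EE Bn G j) (PH Bn G j) s s') else snd (Zsel G j (EE Bn G j) (PH Bn G j) s s'))"
  shows "tmap (aflip Bn G h) (beta j (EE Bn G j) s s' @ replicate (Lsel G j (EE Bn G j) (PH Bn G j)) False) = z"
proof -
  let ?E = "EE Bn G j" and ?P = "PH Bn G j"
  let ?b = "beta j ?E s s'" and ?L = "Lsel G j ?E ?P" and ?zz = "Zsel G j ?E ?P s s'"
  let ?r = "?b @ replicate ?L False"
  have Z: "Zok G j ?E ?P ?L s s' ?zz" using Zok_Zsel[OF H s] .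
  have zl: "length z = length ?b + ?L" using Z z unfolding Zok_def by auto
  have zp: "prefix (tmap (?P (ext t)) ?b) z" using Z z h(2) unfolding Zok_def by auto
  have lb: "length ?b = length (qn j) + ?E + 2 * j" using s unfolding beta_def by simp
  have ESuc: "EE Bn G (Suc j) = length ?b + ?L + 1" using lb by simp
  have Bt: "Bn (qn j @ replicate ?E False)" using mono[OF Bq] by (simp add: prefix_def)
  have lt: "length t = j" using h(1) by auto
  have pe: "pre j (ext t) = pre j h" using pre_ext[OF lt] h(1) by simp
  show ?thesis
  proof (rule nth_equalityI)
    show "length (tmap (aflip Bn G h) ?r) = length z" using zl by simp
    fix i assume "i < length (tmap (aflip Bn G h) ?r)"
    then have i: "i < length ?b + ?L" by simp
    have lhs: "tmap (aflip Bn G h) ?r ! i = (?r ! i \<noteq> aflip Bn G h (take i ?r))"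
      using i by (simp add: tmap_nth)
    have af: "aflip Bn G h (take i ?r) = (?P h (take i ?r) \<or> newf Bn G j ?E ?P h (take i ?r))"
    proof -
      have "length (take i ?r) < EE Bn G (Suc j)" using i ESuc by simp
      then show ?thesis using aflip_eq by (simp only: PH_Suc)
    qed
    show "tmap (aflip Bn G h) ?r ! i = z ! i"
    proof (cases "i < length ?b")
      case True
      have ti: "take i ?r = take i ?b" using True by simp
      have "\<not> newf Bn G j ?E ?P h (take i ?b)"
        using newf_len[of Bn G j ?E ?P h "take i ?b"] True lb by auto
      then have "aflip Bn G h (take i ?r) = ?P h (take i ?b)" using af ti by simp
      also have "\<dots> = ?P (ext t) (take i ?b)" using PH_pre[OF pe] by simp
      finally have a1: "aflip Bn G h (take i ?r) = ?P (ext t) (take i ?b)" .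
      obtain w where "z = tmap (?P (ext t)) ?b @ w" using zp by (auto simp: prefix_def)
      then have "z ! i = tmap (?P (ext t)) ?b ! i" using True by (simp add: nth_append)
      also have "\<dots> = (?b ! i \<noteq> ?P (ext t) (take i ?b))" using True by (simp add: tmap_nth)
      finally show ?thesis using lhs a1 True by (simp add: nth_append)
    next
      case False
      define k where "k = i - length ?b"
      have ik: "i = length ?b + k" "k < ?L" using False i unfolding k_def by auto
      have ti: "take i ?r = ?b @ replicate k False" using ik by (simp add: take_append)
      have ri: "?r ! i = False" using ik by (simp add: nth_append)
      have "\<not> ?P h (take i ?r)"
      proof
        assume "?P h (take i ?r)"
        then have "length (take i ?r) < ?E" by (rule PH_len)
        then show False using ik lb ti by simp
      qed
      then have a1: "aflip Bn G h (take i ?r) = newf Bn G j ?E ?P h (?b @ replicate k False)" using af ti by simp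
      have "newf Bn G j ?E ?P h (?b @ replicate k False) =
           ((pre j h = s \<and> fst ?zz ! i) \<or> (pre j h = s' \<and> snd ?zz ! i))"
      proof
        assume "newf Bn G j ?E ?P h (?b @ replicate k False)"
        then obtain s2 s2' k2 where w: "length s2 = j" "length s2' = j" "s2 \<noteq> s2'" "k2 < ?L"
          "?b @ replicate k False = beta j ?E s2 s2' @ replicate k2 False"
          "(pre j h = s2 \<and> fst (Zsel G j ?E ?P s2 s2') ! (length (beta j ?E s2 s2') + k2))
          \<or> (pre j h = s2' \<and> snd (Zsel G j ?E ?P s2 s2') ! (length (beta j ?E s2 s2') + k2))"
          unfolding newf_def by blast
        have "s2 = s \<and> s2' = s' \<and> k2 = k" using beta_uniq[OF w(5) s(1,2) w(1,2)] .
        then show "(pre j h = s \<and> fst ?zz ! i) \<or> (pre j h = s' \<and> snd ?zz ! i)" using w(6) ik by simp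
      next
        assume hh: "(pre j h = s \<and> fst ?zz ! i) \<or> (pre j h = s' \<and> snd ?zz ! i)"
        have "length s = j \<and> length s' = j \<and> s \<noteq> s' \<and> k < ?L \<and> ?b @ replicate k False = ?b @ replicate k False
          \<and> ((pre j h = s \<and> fst ?zz ! (length ?b + k)) \<or> (pre j h = s' \<and> snd ?zz ! (length ?b + k)))"
          using s ik hh by simp
        then have "\<exists>s2 s2' k2. length s2 = j \<and> length s2' = j \<and> s2 \<noteq> s2' \<and> k2 < ?L \<and> ?b @ replicate k False = beta j ?E s2 s2' @ replicate k2 False
          \<and> ((pre j h = s2 \<and> fst (Zsel G j ?E ?P s2 s2') ! (length (beta j ?E s2 s2') + k2))
             \<or> (pre j h = s2' \<and> snd (Zsel G j ?E ?P s2 s2') ! (length (beta j ?E s2 s2') + k2)))"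
          by blast
        then show "newf Bn G j ?E ?P h (?b @ replicate k False)"
          unfolding newf_def using Bt by blast
      qed
      then have "aflip Bn G h (take i ?r) = z ! i" using a1 h z s(3) by auto
      then show ?thesis using lhs ri by simp
    qed
  qed
qed

lemma qn_enc: "qn (prod_encode (to_nat q, n)) = q"
  by (simp add: qn_def)

theorem flip_family:
  assumes H: "\<forall>Y1 Y2. \<exists>K. \<forall>N\<ge>K. \<exists>z1 z2. length z1 = N \<and> length z2 = N \<and> prefix Y1 z1 \<and> prefix Y2 z2 \<and> G z1 z2"
    and mono: "\<And>l m. Bn l \<Longrightarrow> prefix l m \<Longrightarrow> Bn m"
    and fg: "f \<noteq> g" and Bq: "Bn q"
  shows "\<exists>r. prefix q r \<and> G (tmap (aflip Bn G f) r) (tmap (aflip Bn G g) r)"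
proof -
  obtain d where d: "f d \<noteq> g d" using fg by blast
  define j where "j = prod_encode (to_nat q, Suc d)"
  have qj: "qn j = q" unfolding j_def by (rule qn_enc)
  have dj: "d < j" using le_prod_encode_2[of "Suc d" "to_nat q"] unfolding j_def by simp
  let ?s = "pre j f" and ?s' = "pre j g"
  have ne: "?s \<noteq> ?s'"
  proof
    assume "?s = ?s'"
    then have "?s ! d = ?s' ! d" by simp
    then show False using d dj by (simp add: pre_def)
  qed
  let ?E = "EE Bn G j" and ?P = "PH Bn G j"
  let ?r = "beta j ?E ?s ?s' @ replicate (Lsel G j ?E ?P) False"
  let ?zz = "Zsel G j ?E ?P ?s ?s'"
  have Bq': "Bn (qn j)" using Bq qj by simp
  have e1: "tmap (aflip Bn G f) ?r = fst ?zz"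
    using stage_side[of G Bn j ?s ?s' f ?s "fst ?zz", OF H mono Bq' pre_length pre_length ne] by simp
  have e2: "tmap (aflip Bn G g) ?r = snd ?zz"
    using stage_side[of G Bn j ?s ?s' g ?s' "snd ?zz", OF H mono Bq' pre_length pre_length ne] ne by simp
  have "Zok G j ?E ?P (Lsel G j ?E ?P) ?s ?s' ?zz" using Zok_Zsel[OF H pre_length pre_length ne] .
  then have "G (fst ?zz) (snd ?zz)" unfolding Zok_def by blast
  moreover have "prefix q ?r" using qj unfolding beta_def by (simp add: prefix_def)
  ultimately show ?thesis using e1 e2 by metis
qed


lemma main_family:
  fixes X :: "('a \<times> (nat \<rightharpoonup> bool) set) set" and b :: "(nat \<rightharpoonup> bool) set"
  assumes names: "\<forall>(n, c)\<in>X. c \<in> RO"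
    and not_ground: "bsup {beq X (check y) | y :: 'a set. True} = {}"
    and b: "b \<in> RO" and bne: "b \<noteq> {}"
  shows "\<exists>F :: (nat \<Rightarrow> bool) \<Rightarrow> (nat \<rightharpoonup> bool) set \<Rightarrow> (nat \<rightharpoonup> bool) set.
     (\<forall>f. F f \<in> Aut) \<and> inj F \<and> (\<forall>f. F f b = b) \<and> (\<forall>f. F f {} = {}) \<and>
     (\<forall>f g. f \<noteq> g \<longrightarrow> b \<subseteq> bneg (beq (name_app (F f) X) (name_app (F g) X)))"
proof -
  define Bn where "Bn = (\<lambda>u. tm u \<in> b)"
  define G where "G = good X"
  have H: "\<forall>Y1 Y2. \<exists>K. \<forall>N\<ge>K. \<exists>z1 z2. length z1 = N \<and> length z2 = N \<and> prefix Y1 z1 \<and> prefix Y2 z2 \<and> G z1 z2"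
    unfolding G_def using two_cone[OF names not_ground] by blast
  have mono: "\<And>l m. Bn l \<Longrightarrow> prefix l m \<Longrightarrow> Bn m"
    unfolding Bn_def using opn_node[OF RO_opn[OF b]] by blast
  define F where "F f = sig (aflip Bn G f)" for f
  have key: "\<forall>q. tm q \<in> b \<longrightarrow> (\<exists>r. prefix q r \<and> good X (tmap (aflip Bn G f) r) (tmap (aflip Bn G g) r))"
    if fg: "f \<noteq> g" for f g
  proof (intro allI impI)
    fix q assume "tm q \<in> b"
    then have "Bn q" unfolding Bn_def .
    from flip_family[where Bn=Bn and G=G, OF H mono fg this] show "\<exists>r. prefix q r \<and> good X (tmap (aflip Bn G f) r) (tmap (aflip Bn G g) r)"
      unfolding G_def .
  qed
  have supp: "tm u \<in> b" if "aflip Bn G f u" for f u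
  proof -
    have "Bn u"
    proof (rule aflip_supp[of Bn G f u])
      fix l m assume "Bn l" "prefix l m" then show "Bn m" by (rule mono)
    next
      show "aflip Bn G f u" by (rule that)
    qed
    then show "tm u \<in> b" unfolding Bn_def .
  qed
  obtain p where p: "p \<in> b" using bne by blast
  then have pC: "p \<in> Cond" using RO_sub[OF b] by blast
  obtain l0 where l0: "cext (tm l0) p" using node_ext1[OF pC] by blast
  have l0b: "tm l0 \<in> b" using opnD[OF RO_opn[OF b] p tm_Cond l0] .
  have "inj F"
  proof (rule injI)
    fix f g assume eq: "F f = F g"
    show "f = g"
    proof (rule ccontr)
      assume fg: "f \<noteq> g"
      obtain r where r: "good X (tmap (aflip Bn G f) r) (tmap (aflip Bn G g) r)" using key[OF fg] l0b by blast
      have "sig (aflip Bn G f) \<noteq> sig (aflip Bn G g)" using sig_distinct[OF names r] .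
      then show False using eq unfolding F_def by simp
    qed
  qed
  moreover have "\<forall>f. F f \<in> Aut" unfolding F_def using sig_Aut by blast
  moreover have "\<forall>f. F f b = b" unfolding F_def using sig_fix[OF b] supp by blast
  moreover have "\<forall>f. F f {} = {}" unfolding F_def using sig_empty by blast
  moreover have "\<forall>f g. f \<noteq> g \<longrightarrow> b \<subseteq> bneg (beq (name_app (F f) X) (name_app (F g) X))"
    unfolding F_def using final_prop[OF names b key] by blast
  ultimately show ?thesis by blast
qed

theorem lemma5p5:
  fixes X :: "('a \<times> (nat \<rightharpoonup> bool) set) set"
    and b :: "(nat \<rightharpoonup> bool) set"
  assumes names: "\<forall>(n, c)\<in>X. c \<in> RO"
    and not_ground: "bsup {beq X (check y) | y :: 'a set. True} = {}"
    and b: "b \<in> RO"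
  shows "\<exists>A. A \<subseteq> Aut \<and> uncountable A \<and>
           (\<forall>\<sigma>\<in>A. \<forall>\<tau>\<in>A. \<sigma> \<noteq> \<tau> \<longrightarrow>
              \<sigma> b = b \<and> b = \<tau> b \<and>
              b \<subseteq> bneg (beq (name_app \<sigma> X) (name_app \<tau> X)))"
proof -
  define b' where "b' = (if b = {} then Cond else b)"
  have b': "b' \<in> RO" unfolding b'_def using b Cond_RO by simp
  have b'ne: "b' \<noteq> {}" unfolding b'_def using tm_Cond[of "[]"] b by (metis empty_iff)
  obtain F :: "(nat \<Rightarrow> bool) \<Rightarrow> (nat \<rightharpoonup> bool) set \<Rightarrow> (nat \<rightharpoonup> bool) set" where
    F: "\<forall>f. F f \<in> Aut" "inj F" "\<forall>f. F f b' = b'" "\<forall>f. F f {} = {}"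
       "\<forall>f g. f \<noteq> g \<longrightarrow> b' \<subseteq> bneg (beq (name_app (F f) X) (name_app (F g) X))"
    using main_family[OF names not_ground b' b'ne] by blast
  have unc: "uncountable (range F)"
  proof
    assume "countable (range F)"
    then have "countable (UNIV :: (nat \<Rightarrow> bool) set)"
      using countable_image_inj_on[of F UNIV] F(2) by simp
    then show False using uncountable_funs by simp
  qed
  have prp: "\<forall>\<sigma>\<in>range F. \<forall>\<tau>\<in>range F. \<sigma> \<noteq> \<tau> \<longrightarrow>
              \<sigma> b = b \<and> b = \<tau> b \<and> b \<subseteq> bneg (beq (name_app \<sigma> X) (name_app \<tau> X))"
  proof (intro ballI impI)
    fix \<sigma> \<tau> assume s: "\<sigma> \<in> range F" and t: "\<tau> \<in> range F" and ne: "\<sigma> \<noteq> \<tau>"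
    obtain f g where fg: "\<sigma> = F f" "\<tau> = F g" using s t by blast
    then have "f \<noteq> g" using ne by blast
    show "\<sigma> b = b \<and> b = \<tau> b \<and> b \<subseteq> bneg (beq (name_app \<sigma> X) (name_app \<tau> X))"
    proof (cases "b = {}")
      case True
      then show ?thesis using F(4) fg by simp
    next
      case False
      then have "b' = b" unfolding b'_def by simp
      then show ?thesis using F(3,5) fg \<open>f \<noteq> g\<close> by simp
    qed
  qed
  show ?thesis
    using F(1) unc prp by (intro exI[of _ "range F"]) blast
qed

end
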